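(* The map $\Psi\colon A\times J\to\widehat\Pi_C$, $\Psi((y,s),t)=\iota_t(\Psi_t(y,s))$, is a slice-preserving homeomorphism. In particular, each $\Psi_t\colon A\to\hat D_t\setminus\hat I_t$ is a homeomorphism.
   Context: Setup: $I=[-1,1]$, $J=(1,2]$, $f_t(x)=\min(t(x-1)+3,\,t(1-x)-1)$. $S$ is the circle of radius 2 with angular coordinate $y$; $D$ is the disk of radius 2 with coordinates $(y,s)\in S\times[0,1]$ (from a smooth embedding of the mapping cylinder of $y\mapsto\cos y$), $(y,0)=y\in S$, $(y,1)=\cos y\in I\subset D$. $\Upsilon(y,s)=(y,2s)$ for $s\le1/2$, $(y,1)$ for $s\ge1/2$. An unwrapping is a continuously varying (in $t$) family of orientation-preserving near-homeomorphisms $\bar f_t\colon D\to D$ with $\bar f_t$ injective on $I$, $\bar f_t(I)\subset\{s\ge1/2\}$, $\Upsilon\circ\bar f_t|_I=f_t$, the second coordinate of $\bar f_t(y,s)$ equal to $s$ for $s\le1/2$; assume moreover $\bar f_t=\mathrm{id}$ on $S\times[0,3/4]$. $H_t=\Upsilon\circ\bar f_t$, $\hat D_t=\varprojlim(D,H_t)$, $\hat I_t=\varprojlim(I,f_t)\subset\hat D_t$. Let $\Pi=D\times J$, $H(z,t)=(H_t(z),t)$, $\widehat\Pi=\varprojlim(\Pi,H)$ (threads $\langle w_0,w_1,\dots\rangle$ with $H(w_{n+1})=w_n$, product topology), and $\iota_t\colon\hat D_t\to\widehat\Pi$, $\langle z_0,z_1,\dots\rangle\mapsto\langle(z_0,t),(z_1,t),\dots\rangle$;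 let $\widehat\Pi_C=\widehat\Pi\setminus\bigsqcup_{t\in J}\iota_t(\hat I_t)$. Let $A=S\times[0,\infty)$ and define $\Psi_t\colon A\to\hat D_t\setminus\hat I_t$: for $s\in[0,1)$, $\Psi_t(y,s)=\langle(y,s),(y,s/2),(y,s/4),\dots\rangle$; for $s\ge1$, with $k=\lfloor s\rfloor$, $v=(s-k+1)/2$, $\Psi_t(y,s)=\langle z_0,z_1,\dots\rangle$ where $z_{k-j}=H_t^{\,j}(y,v)$ ($1\le j\le k$), $z_k=(y,v)$, $z_{k+j}=(y,v/2^j)$ ($j\ge1$). Slice-preserving means $\Psi(A\times\{t\})\subset\iota_t(\hat D_t)$. *)

theory Defs
  imports "HOL-Complex_Analysis.Complex_Analysis"
begin

definition Dsk :: "complex set" where "Dsk = cball 0 2"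
definition Scirc :: "complex set" where "Scirc = sphere 0 2"
definition Iseg :: "complex set" where "Iseg = complex_of_real ` {-1..1}"
definition Jint :: "real set" where "Jint = {1<..2}"

definition ft :: "real \<Rightarrow> real \<Rightarrow> real" where
  "ft t x = min (t * (x - 1) + 3) (t * (1 - x) - 1)"

text \<open>Coordinates (y,s) on D coming from an embedding of the mapping cylinder of
y |-> cos y.  A point y of S is represented by the point w = 2 e^{iy} of the circle,
so cos y = Re w / 2.  phi (w,s) is the point of D with coordinates (y,s).\<close>

definition mapping_cyl_coords :: "(complex \<times> real \<Rightarrow> complex) \<Rightarrow> bool" where
  "mapping_cyl_coords \<phi> \<longleftrightarrow>
     continuous_on (Scirc \<times> {0..1}) \<phi> \<and> \<phi> ` (Scirc \<times> {0..1}) = Dsk \<and>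
     (\<forall>w\<in>Scirc. \<phi> (w, 0) = w \<and> \<phi> (w, 1) = complex_of_real (Re w / 2)) \<and>
     (\<forall>w\<in>Scirc. \<forall>s\<in>{0..1}. \<forall>w'\<in>Scirc. \<forall>s'\<in>{0..1}.
        \<phi> (w, s) = \<phi> (w', s') \<longrightarrow> (w = w' \<and> s = s') \<or> (s = 1 \<and> s' = 1))"

definition cyl_coords :: "(complex \<times> real \<Rightarrow> complex) \<Rightarrow> complex \<Rightarrow> complex \<times> real" where
  "cyl_coords \<phi> z = (SOME p. p \<in> Scirc \<times> {0..1} \<and> \<phi> p = z)"

definition Upsilon :: "(complex \<times> real \<Rightarrow> complex) \<Rightarrow> complex \<Rightarrow> complex" where
  "Upsilon \<phi> z = (case cyl_coords \<phi> z of (w, s) \<Rightarrow> \<phi> (w, min 1 (2 * s)))"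

text \<open>Orientation-preserving homeomorphisms of D (winding number of the image of the
positively oriented boundary circle is 1), and orientation-preserving
near-homeomorphisms (uniform limits of such).\<close>

definition op_homeo :: "(complex \<Rightarrow> complex) \<Rightarrow> bool" where
  "op_homeo h \<longleftrightarrow> (\<exists>h'. homeomorphism Dsk Dsk h h') \<and>
     winding_number (h \<circ> circlepath 0 2) 0 = 1"

definition op_near_homeo :: "(complex \<Rightarrow> complex) \<Rightarrow> bool" where
  "op_near_homeo g \<longleftrightarrow> g ` Dsk \<subseteq> Dsk \<and>
     (\<forall>\<epsilon>>0. \<exists>h. op_homeo h \<and> (\<forall>z\<in>Dsk. dist (g z) (h z) < \<epsilon>))"

definition unwrapping :: "(complex \<times> real \<Rightarrow> complex) \<Rightarrow> (real \<Rightarrow> complex \<Rightarrow> complex) \<Rightarrow> bool" where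
  "unwrapping \<phi> fbar \<longleftrightarrow>
     continuous_on (Dsk \<times> Jint) (\<lambda>(z, t). fbar t z) \<and>
     (\<forall>t\<in>Jint. op_near_homeo (fbar t) \<and> inj_on (fbar t) Iseg \<and>
        fbar t ` Iseg \<subseteq> \<phi> ` (Scirc \<times> {1/2..1}) \<and>
        (\<forall>x\<in>{-1..1}. Upsilon \<phi> (fbar t (complex_of_real x)) = complex_of_real (ft t x)) \<and>
        (\<forall>w\<in>Scirc. \<forall>s\<in>{0..1/2}. \<exists>w'\<in>Scirc. fbar t (\<phi> (w, s)) = \<phi> (w', s)))"

definition Ht :: "(complex \<times> real \<Rightarrow> complex) \<Rightarrow> (real \<Rightarrow> complex \<Rightarrow> complex) \<Rightarrow> real \<Rightarrow> complex \<Rightarrow> complex" where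
  "Ht \<phi> fbar t = Upsilon \<phi> \<circ> fbar t"

text \<open>Inverse limits, as sets of threads with the product topology on nat => _.\<close>

definition Dhat :: "(complex \<times> real \<Rightarrow> complex) \<Rightarrow> (real \<Rightarrow> complex \<Rightarrow> complex) \<Rightarrow> real \<Rightarrow> (nat \<Rightarrow> complex) set" where
  "Dhat \<phi> fbar t = {z. \<forall>n. z n \<in> Dsk \<and> Ht \<phi> fbar t (z (Suc n)) = z n}"

definition Ihat :: "real \<Rightarrow> (nat \<Rightarrow> complex) set" where
  "Ihat t = {(\<lambda>n. complex_of_real (x n)) | x. \<forall>n. x n \<in> {-1..1} \<and> ft t (x (Suc n)) = x n}"

definition Pihat :: "(complex \<times> real \<Rightarrow> complex) \<Rightarrow> (real \<Rightarrow> complex \<Rightarrow> complex) \<Rightarrow> (nat \<Rightarrow> complex \<times> real) set" where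
  "Pihat \<phi> fbar = {w. \<forall>n. w n \<in> Dsk \<times> Jint \<and>
      (Ht \<phi> fbar (snd (w (Suc n))) (fst (w (Suc n))), snd (w (Suc n))) = w n}"

definition iota :: "real \<Rightarrow> (nat \<Rightarrow> complex) \<Rightarrow> (nat \<Rightarrow> complex \<times> real)" where
  "iota t z = (\<lambda>n. (z n, t))"

definition PihatC :: "(complex \<times> real \<Rightarrow> complex) \<Rightarrow> (real \<Rightarrow> complex \<Rightarrow> complex) \<Rightarrow> (nat \<Rightarrow> complex \<times> real) set" where
  "PihatC \<phi> fbar = Pihat \<phi> fbar - (\<Union>t\<in>Jint. iota t ` Ihat t)"

definition Acyl :: "(complex \<times> real) set" where "Acyl = Scirc \<times> {0..}"

definition Psit :: "(complex \<times> real \<Rightarrow> complex) \<Rightarrow> (real \<Rightarrow> complex \<Rightarrow> complex) \<Rightarrow> real \<Rightarrow> complex \<times> real \<Rightarrow> (nat \<Rightarrow> complex)" where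
  "Psit \<phi> fbar t p = (case p of (w, s) \<Rightarrow>
     if s < 1 then (\<lambda>n. \<phi> (w, s / 2 ^ n))
     else (let k = nat \<lfloor>s\<rfloor>; v = (s - real k + 1) / 2 in
       (\<lambda>n. if n \<le> k then (Ht \<phi> fbar t ^^ (k - n)) (\<phi> (w, v))
            else \<phi> (w, v / 2 ^ (n - k)))))"

definition Psi :: "(complex \<times> real \<Rightarrow> complex) \<Rightarrow> (real \<Rightarrow> complex \<Rightarrow> complex) \<Rightarrow> (complex \<times> real) \<times> real \<Rightarrow> (nat \<Rightarrow> complex \<times> real)" where
  "Psi \<phi> fbar pt = (case pt of (p, t) \<Rightarrow> iota t (Psit \<phi> fbar t p))"

end

theory Submission
  imports Defs
begin

lemma cont_local:
  fixes S :: "'a::metric_space set"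
  assumes "\<And>x. x \<in> S \<Longrightarrow> \<exists>U. openin (top_of_set S) U \<and> x \<in> U \<and> continuous_on U f"
  shows "continuous_on S f"
proof (rule continuous_on_eq_continuous_within[THEN iffD2], rule ballI)
  fix x assume x: "x \<in> S"
  then obtain U where U: "openin (top_of_set S) U" "x \<in> U" "continuous_on U f" using assms by blast
  then obtain V where O: "open V" "U = S \<inter> V" by (auto simp: openin_open)
  have "continuous (at x within U) f" using U continuous_on_eq_continuous_within by blast
  moreover have "at x within U = at x within S"
    by (rule at_within_nhd[of x V]) (use O U in auto)
  ultimately show "continuous (at x within S) f" by simp
qed

lemma cont_quot:
  fixes \<phi> :: "'a::metric_space \<Rightarrow> 'b::metric_space" and F :: "'b \<Rightarrow> 'c::metric_space"
  assumes "compact K" "continuous_on K \<phi>" "\<phi> ` K = T" "continuous_on K (F \<circ> \<phi>)"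
  shows "continuous_on T F"
  unfolding continuous_on_closed_invariant
proof (intro allI impI)
  fix B :: "'c set" assume B: "closed B"
  obtain A where A: "closed A" "A \<inter> K = (F \<circ> \<phi>) -` B \<inter> K"
    using assms(4) B unfolding continuous_on_closed_invariant by blast
  have "compact (A \<inter> K)" using A(1) assms(1) by (simp add: closed_Int_compact)
  hence c: "compact (\<phi> ` (A \<inter> K))"
    by (meson assms(2) compact_continuous_image continuous_on_subset inf_le2)
  have "\<phi> ` (A \<inter> K) \<inter> T = F -` B \<inter> T" using A(2) assms(3) by auto
  thus "\<exists>A. closed A \<and> A \<inter> T = F -` B \<inter> T" using c compact_imp_closed by blast
qed

locale L =
  fixes \<phi> :: "complex \<times> real \<Rightarrow> complex" and fbar :: "real \<Rightarrow> complex \<Rightarrow> complex"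
  assumes mc: "mapping_cyl_coords \<phi>" and uw: "unwrapping \<phi> fbar"
    and idf: "\<forall>t\<in>Jint. \<forall>w\<in>Scirc. \<forall>s\<in>{0..3/4}. fbar t (\<phi> (w, s)) = \<phi> (w, s)"
begin

definition "sg z = snd (cyl_coords \<phi> z)"
definition "om z = fst (cyl_coords \<phi> z)"
abbreviation "K \<equiv> Scirc \<times> {0..1::real}"
abbreviation "H \<equiv> Ht \<phi> fbar"

lemma phi_facts: "continuous_on K \<phi>" "\<phi> ` K = Dsk"
  "\<forall>w\<in>Scirc. \<phi> (w,0) = w \<and> \<phi> (w,1) = complex_of_real (Re w / 2)"
  using mc unfolding mapping_cyl_coords_def by blast+

lemma phi_cont: "continuous_on K \<phi>" and phi_img: "\<phi> ` K = Dsk"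
  and phi0: "w \<in> Scirc \<Longrightarrow> \<phi> (w,0) = w"
  and phi1: "w \<in> Scirc \<Longrightarrow> \<phi> (w,1) = complex_of_real (Re w / 2)"
  using phi_facts by auto

lemma phi_inj: assumes "w\<in>Scirc" "0 \<le> s" "s \<le> 1" "w'\<in>Scirc" "0 \<le> s'" "s' \<le> 1" "\<phi>(w,s) = \<phi>(w',s')"
  shows "(w=w' \<and> s=s') \<or> (s=1 \<and> s'=1)"
proof -
  have A: "\<forall>w\<in>Scirc. \<forall>s\<in>{0..1::real}. \<forall>w'\<in>Scirc. \<forall>s'\<in>{0..1::real}.
        \<phi> (w, s) = \<phi> (w', s') \<longrightarrow> (w = w' \<and> s = s') \<or> (s = 1 \<and> s' = 1)"
    using mc unfolding mapping_cyl_coords_def by blast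
  show ?thesis using A assms by simp
qed

lemma phi_D: "w \<in> Scirc \<Longrightarrow> 0 \<le> s \<Longrightarrow> s \<le> 1 \<Longrightarrow> \<phi> (w,s) \<in> Dsk"
  using phi_img by force

lemma cc: "z \<in> Dsk \<Longrightarrow> cyl_coords \<phi> z \<in> K \<and> \<phi> (cyl_coords \<phi> z) = z"
  unfolding cyl_coords_def by (rule someI_ex) (use phi_img in force)

lemma D_repr: "z \<in> Dsk \<Longrightarrow> om z \<in> Scirc \<and> 0 \<le> sg z \<and> sg z \<le> 1 \<and> \<phi> (om z, sg z) = z"
  using cc[of z] by (cases "cyl_coords \<phi> z") (auto simp: om_def sg_def)

lemma cc_pt: assumes "w \<in> Scirc" "0 \<le> s" "s \<le> 1"
  obtains w' s' where "cyl_coords \<phi> (\<phi>(w,s)) = (w',s')" "(w=w' \<and> s=s') \<or> (s=1 \<and> s'=1)"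
    "\<phi>(w',s') = \<phi>(w,s)"
proof -
  have z: "\<phi>(w,s) \<in> Dsk" using assms phi_D by auto
  obtain w' s' where p: "cyl_coords \<phi> (\<phi>(w,s)) = (w',s')" by force
  have c: "cyl_coords \<phi> (\<phi>(w,s)) \<in> K" "\<phi> (cyl_coords \<phi> (\<phi>(w,s))) = \<phi>(w,s)" using cc[OF z] by auto
  have q: "w' \<in> Scirc" "0 \<le> s'" "s' \<le> 1" using c(1) unfolding p by auto
  have e: "\<phi>(w',s') = \<phi>(w,s)" using c(2) unfolding p .
  have "(w=w' \<and> s=s') \<or> (s=1 \<and> s'=1)" using phi_inj[OF assms q e[symmetric]] .
  thus ?thesis using that p e by blast
qed

lemma cc_unique: assumes "w \<in> Scirc" "0 \<le> s" "s < 1" shows "cyl_coords \<phi> (\<phi>(w,s)) = (w,s)"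
proof -
  obtain w' s' where "cyl_coords \<phi> (\<phi>(w,s)) = (w',s')" "(w=w' \<and> s=s') \<or> (s=1 \<and> s'=1)"
    "\<phi>(w',s') = \<phi>(w,s)"
    by (rule cc_pt[of w s]) (use assms in auto)
  thus ?thesis using assms(3) by auto
qed

lemma sg_phi: assumes "w \<in> Scirc" "0 \<le> s" "s \<le> 1" shows "sg (\<phi>(w,s)) = s"
proof -
  obtain w' s' where "cyl_coords \<phi> (\<phi>(w,s)) = (w',s')" "(w=w' \<and> s=s') \<or> (s=1 \<and> s'=1)"
    "\<phi>(w',s') = \<phi>(w,s)"
    by (rule cc_pt[of w s]) (use assms in auto)
  thus ?thesis by (auto simp: sg_def)
qed

lemma om_phi: "w \<in> Scirc \<Longrightarrow> 0 \<le> s \<Longrightarrow> s < 1 \<Longrightarrow> om (\<phi>(w,s)) = w"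
  using cc_unique by (simp add: om_def)

lemma Ups_phi: assumes "w \<in> Scirc" "0 \<le> s" "s \<le> 1"
  shows "Upsilon \<phi> (\<phi>(w,s)) = \<phi>(w, min 1 (2 * s))"
proof (cases "s < 1")
  case True thus ?thesis using cc_unique assms by (simp add: Upsilon_def)
next
  case False
  hence s1: "s = 1" using assms by auto
  obtain w' s' where p: "cyl_coords \<phi> (\<phi>(w,s)) = (w',s')" "(w=w' \<and> s=s') \<or> (s=1 \<and> s'=1)"
    "\<phi>(w',s') = \<phi>(w,s)"
    by (rule cc_pt[of w s]) (use assms in auto)
  have "s' = 1" using p(2) s1 by auto
  hence "Upsilon \<phi> (\<phi>(w,s)) = \<phi>(w',s')" unfolding Upsilon_def p(1) by simp
  thus ?thesis using p(3) s1 by simp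
qed

lemma Ups_D: "z \<in> Dsk \<Longrightarrow> Upsilon \<phi> z = \<phi>(om z, min 1 (2 * sg z))"
  using D_repr[of z] Ups_phi[of "om z" "sg z"] by auto

lemma sg_Ups: assumes "z \<in> Dsk" shows "sg (Upsilon \<phi> z) = min 1 (2 * sg z) \<and> Upsilon \<phi> z \<in> Dsk"
proof -
  have r: "om z \<in> Scirc" "0 \<le> sg z" "sg z \<le> 1" using D_repr[OF assms] by auto
  have m: "0 \<le> min 1 (2 * sg z)" "min 1 (2 * sg z) \<le> 1" using r by auto
  show ?thesis unfolding Ups_D[OF assms] using sg_phi[OF r(1) m] phi_D[OF r(1) m] by simp
qed

lemma compact_K: "compact K"
  by (simp add: Scirc_def compact_Times)

lemma sg_cont: "continuous_on Dsk sg"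
proof (rule cont_quot[OF compact_K phi_cont phi_img])
  show "continuous_on K (sg \<circ> \<phi>)"
    by (rule continuous_on_eq[OF continuous_on_snd[OF continuous_on_id]]) (auto simp: sg_phi)
qed

lemma Ups_cont: "continuous_on Dsk (Upsilon \<phi>)"
proof (rule cont_quot[OF compact_K phi_cont phi_img])
  have c1: "continuous_on K (\<lambda>p. (fst p, min 1 (2 * snd p)))"
    by (intro continuous_intros)
  have i1: "(\<lambda>p. (fst p, min 1 (2 * snd p))) ` K \<subseteq> K" by auto
  have "continuous_on K (\<lambda>p. \<phi> (fst p, min 1 (2 * snd p)))"
    using continuous_on_compose2[OF phi_cont c1 i1] by simp
  thus "continuous_on K (Upsilon \<phi> \<circ> \<phi>)"
    by (rule continuous_on_eq) (auto simp: Ups_phi)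
qed

lemma om_cont: "continuous_on {z \<in> Dsk. sg z \<le> 1/2} om"
proof (rule cont_quot[of "Scirc \<times> {0..1/2}" \<phi>])
  show "compact (Scirc \<times> {0..1/2::real})" by (simp add: Scirc_def compact_Times)
  show "continuous_on (Scirc \<times> {0..1/2}) \<phi>" by (rule continuous_on_subset[OF phi_cont]) auto
  show "\<phi> ` (Scirc \<times> {0..1/2}) = {z \<in> Dsk. sg z \<le> 1/2}"
  proof
    show "\<phi> ` (Scirc \<times> {0..1/2}) \<subseteq> {z \<in> Dsk. sg z \<le> 1/2}" using phi_D sg_phi by auto
    show "{z \<in> Dsk. sg z \<le> 1/2} \<subseteq> \<phi> ` (Scirc \<times> {0..1/2})"
    proof
      fix z assume "z \<in> {z \<in> Dsk. sg z \<le> 1/2}"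
      thus "z \<in> \<phi> ` (Scirc \<times> {0..1/2})" using D_repr[of z] by (auto intro!: image_eqI[of z _ "(om z, sg z)"])
    qed
  qed
  show "continuous_on (Scirc \<times> {0..1/2}) (om \<circ> \<phi>)"
    by (rule continuous_on_eq[OF continuous_on_fst[OF continuous_on_id]]) (auto simp: om_phi)
qed


lemma uw_cont: "continuous_on (Dsk \<times> Jint) (\<lambda>p. fbar (snd p) (fst p))"
  using uw unfolding unwrapping_def by (simp add: case_prod_beta')

lemma uw_t: assumes "t \<in> Jint"
  shows "op_near_homeo (fbar t)"
    "\<forall>x\<in>{-1..1}. Upsilon \<phi> (fbar t (complex_of_real x)) = complex_of_real (ft t x)"
  using uw assms unfolding unwrapping_def by blast+

lemma fb_D: "t \<in> Jint \<Longrightarrow> z \<in> Dsk \<Longrightarrow> fbar t z \<in> Dsk"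
  using uw_t(1) unfolding op_near_homeo_def by blast

lemma fb_id: assumes "t \<in> Jint" "z \<in> Dsk" "sg z \<le> 3/4" shows "fbar t z = z"
proof -
  have r: "om z \<in> Scirc" "0 \<le> sg z" "\<phi> (om z, sg z) = z" using D_repr[OF assms(2)] by auto
  show ?thesis using idf assms(1,3) r by force
qed

lemma fb_cont: assumes "t \<in> Jint" shows "continuous_on Dsk (fbar t)"
proof -
  have c: "continuous_on Dsk (\<lambda>z. (z, t))" by (intro continuous_intros)
  have i: "(\<lambda>z. (z, t)) ` Dsk \<subseteq> Dsk \<times> Jint" using assms by auto
  show ?thesis using continuous_on_compose2[OF uw_cont c i] by simp
qed

lemma sg_pos_norm: assumes "z \<in> Dsk" "sg z > 0" shows "norm z < 2"
proof (rule ccontr)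
  assume "\<not> norm z < 2"
  hence "norm z = 2" using assms(1) by (auto simp: Dsk_def)
  hence zs: "z \<in> Scirc" by (simp add: Scirc_def)
  hence "sg z = 0" using sg_phi[of z 0] phi0[of z] by simp
  thus False using assms(2) by simp
qed

lemma no_collapse:
  assumes t: "t \<in> Jint" and p: "p \<in> Dsk" "sg p > 3/4" and q: "sg (fbar t p) = 1/2"
  shows False
proof -
  define q where "q = fbar t p"
  have qD: "q \<in> Dsk" using fb_D[OF t p(1)] q_def by simp
  have nq: "norm q < 2" using sg_pos_norm[OF qD] q q_def by simp
  obtain \<delta> where d: "\<delta> > 0" "\<forall>x\<in>Dsk. dist x q < \<delta> \<longrightarrow> dist (sg x) (sg q) < 1/4"
    using sg_cont qD unfolding continuous_on_iff by (meson zero_less_divide_1_iff zero_less_numeral)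
  define r where "r = min (\<delta>/2) ((2 - norm q)/2)"
  have r0: "r > 0" using d nq by (simp add: r_def)
  have "r \<le> (2 - norm q)/2" unfolding r_def by (rule min.cobounded2)
  have cD: "x \<in> Dsk" if "x \<in> cball q r" for x
  proof -
    have "norm x \<le> norm q + dist q x" by (metis dist_norm norm_triangle_sub add.commute norm_minus_commute)
    also have "\<dots> \<le> norm q + r" using that by simp
    also have "\<dots> < 2"
    proof -
      have "2 * r \<le> 2 - norm q" using \<open>r \<le> (2 - norm q)/2\<close> by simp
      thus ?thesis using nq by linarith
    qed
    finally show ?thesis by (simp add: Dsk_def)
  qed
  have csg: "sg x < 3/4" if "x \<in> cball q r" for x
  proof -
    have "dist x q < \<delta>" using that d(1) by (simp add: r_def dist_commute)
    hence "dist (sg x) (sg q) < 1/4" using d(2) cD[OF that] by blast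
    hence "sg x - sg q < 1/4" unfolding dist_real_def by (metis abs_less_iff)
    moreover have "sg q = 1/2" using q q_def by simp
    ultimately show ?thesis by linarith
  qed
  have cid: "fbar t x = x" if "x \<in> cball q r" for x
    using fb_id[OF t cD[OF that]] csg[OF that] by simp
  obtain h where h: "op_homeo h" "\<forall>z\<in>Dsk. dist (fbar t z) (h z) < r/2"
    using uw_t(1)[OF t] r0 unfolding op_near_homeo_def by (meson half_gt_zero)
  obtain h' where hh: "homeomorphism Dsk Dsk h h'" using h(1) unfolding op_homeo_def by blast
  have hc: "continuous_on Dsk h" and hinv: "\<And>x. x \<in> Dsk \<Longrightarrow> h' (h x) = x"
    using hh unfolding homeomorphism_def by auto
  define y where "y = h p"
  have yq: "dist q y < r/2" using h(2) p(1) by (simp add: y_def q_def)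
  define F where "F x = x - h x + y" for x
  have Fc: "continuous_on (cball q r) F" unfolding F_def
    by (intro continuous_intros continuous_on_subset[OF hc]) (use cD in auto)
  have Fi: "F \<in> cball q r \<rightarrow> cball q r"
  proof
    fix x assume x: "x \<in> cball q r"
    have "dist (fbar t x) (h x) < r/2" using h(2) cD[OF x] by blast
    hence "dist (h x) x < r/2" using cid[OF x] by (simp add: dist_commute)
    have e: "q - F x = (h x - x) + (q - y)" by (simp add: F_def algebra_simps)
    have "dist q (F x) \<le> dist (h x) x + dist q y"
      unfolding dist_norm e by (rule norm_triangle_ineq)
    also have "\<dots> < r" using yq \<open>dist (h x) x < r/2\<close> by simp
    finally show "F x \<in> cball q r" by simp
  qed
  obtain x where x: "x \<in> cball q r" "F x = x" using brouwer_ball[OF r0 Fc Fi] by blast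
  have "h x = h p" using x(2) unfolding F_def y_def by (simp add: algebra_simps)
  hence "x = p" using hinv[OF cD[OF x(1)]] hinv[OF p(1)] by metis
  thus False using csg[OF x(1)] p(2) by simp
qed

lemma fiber: assumes t: "t \<in> Jint" and z: "z \<in> Dsk" "sg z > 3/4" shows "sg (fbar t z) > 1/2"
proof (rule ccontr)
  assume a: "\<not> sg (fbar t z) > 1/2"
  have r: "om z \<in> Scirc" "sg z \<le> 1" "\<phi> (om z, sg z) = z" using D_repr[OF z(1)] by auto
  define f where "f s = sg (fbar t (\<phi> (om z, s)))" for s
  have c1: "continuous_on {3/4..sg z} (\<lambda>s. \<phi> (om z, s))"
    by (rule continuous_on_compose2[OF phi_cont]) (use r in \<open>auto intro!: continuous_intros\<close>)
  have i1: "(\<lambda>s. \<phi> (om z, s)) ` {3/4..sg z} \<subseteq> Dsk" using r phi_D by auto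
  have c2: "continuous_on {3/4..sg z} (\<lambda>s. fbar t (\<phi> (om z, s)))"
    using continuous_on_compose2[OF fb_cont[OF t] c1 i1] by simp
  have i2: "(\<lambda>s. fbar t (\<phi> (om z, s))) ` {3/4..sg z} \<subseteq> Dsk" using i1 fb_D[OF t] by auto
  have fc: "continuous_on {3/4..sg z} f"
    using continuous_on_compose2[OF sg_cont c2 i2] by (simp add: f_def)
  have f34: "f (3/4) = 3/4"
    using fb_id[OF t phi_D[OF r(1)], of "3/4"] sg_phi[OF r(1), of "3/4"] by (simp add: f_def)
  have fz: "f (sg z) \<le> 1/2" using a r by (simp add: f_def)
  obtain x where x: "3/4 \<le> x" "x \<le> sg z" "f x = 1/2"
    using IVT2'[of f "sg z" "1/2" "3/4", OF fz _ _ fc] f34 z(2) by auto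
  have x34: "x \<noteq> 3/4"
  proof
    assume "x = 3/4"
    hence "f x = f (3/4)" by (rule arg_cong)
    hence "f x = 3/4" using f34 by simp
    with x(3) show False by simp
  qed
  show False
    using no_collapse[OF t phi_D[OF r(1), of x], of] sg_phi[OF r(1), of x] x x34 r(2) by (simp add: f_def)
qed

lemma H_eq: "H t z = Upsilon \<phi> (fbar t z)" by (simp add: Ht_def)

lemma H_D: "t \<in> Jint \<Longrightarrow> z \<in> Dsk \<Longrightarrow> H t z \<in> Dsk"
  using sg_Ups fb_D H_eq by simp

lemma sg_H: assumes "t \<in> Jint" "z \<in> Dsk" shows "sg (H t z) = min 1 (2 * sg z)"
proof (cases "sg z \<le> 3/4")
  case True thus ?thesis using fb_id[OF assms] sg_Ups[OF assms(2)] H_eq by simp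
next
  case False
  hence f: "sg (fbar t z) > 1/2" using fiber[OF assms] by simp
  have "sg (H t z) = min 1 (2 * sg (fbar t z))" using sg_Ups[OF fb_D[OF assms]] H_eq by simp
  thus ?thesis using f False by simp
qed

lemma H_small: assumes "t \<in> Jint" "z \<in> Dsk" "sg z \<le> 1/2" shows "H t z = \<phi> (om z, 2 * sg z)"
  using fb_id[OF assms(1,2)] assms(3) Ups_D[OF assms(2)] H_eq by simp

lemma H_iter: assumes t: "t \<in> Jint" and w: "w \<in> Scirc" and u: "0 \<le> u"
  shows "2^j * u \<le> 1 \<Longrightarrow> (H t ^^ j) (\<phi> (w, u)) = \<phi> (w, 2^j * u)"
proof (induction j)
  case 0 thus ?case by simp
next
  case (Suc j)
  have a: "2^j * u \<le> 1/2" using Suc.prems by simp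
  hence IH: "(H t ^^ j) (\<phi> (w, u)) = \<phi> (w, 2^j * u)" using Suc.IH by simp
  have nn: "0 \<le> 2^j * u" using u by simp
  have "H t (\<phi> (w, 2^j * u)) = \<phi> (w, 2 * (2^j * u))"
    using H_small[OF t phi_D[OF w nn], of] a sg_phi[OF w nn] om_phi[OF w nn] by simp
  thus ?case using IH by (simp add: mult.assoc)
qed

lemma Hiter_sg: assumes t: "t \<in> Jint" and z: "z \<in> Dsk"
  shows "(H t ^^ j) z \<in> Dsk \<and> sg ((H t ^^ j) z) = min 1 (2^j * sg z)"
proof (induction j)
  case 0 thus ?case using z D_repr[OF z] by simp
next
  case (Suc j)
  have s0: "0 \<le> sg z" using D_repr[OF z] by simp
  have "sg (H t ((H t ^^ j) z)) = min 1 (2 * min 1 (2^j * sg z))"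
    using sg_H[OF t] Suc.IH by simp
  also have "\<dots> = min 1 (2^(Suc j) * sg z)" using s0 by (simp add: min_def)
  finally show ?case using H_D[OF t] Suc.IH by simp
qed

definition "HH p = (H (snd p) (fst p), snd p)"

lemma HH_iter: "(HH ^^ j) (z, t) = ((H t ^^ j) z, t)"
  by (induction j) (simp_all add: HH_def)

lemma HH_cont: "continuous_on (Dsk \<times> Jint) (HH ^^ j) \<and> (HH ^^ j) ` (Dsk \<times> Jint) \<subseteq> Dsk \<times> Jint"
proof (induction j)
  case 0 thus ?case by simp
next
  case (Suc j)
  have c1: "continuous_on (Dsk \<times> Jint) (\<lambda>p. fbar (snd p) (fst p))" by (rule uw_cont)
  have i1: "(\<lambda>p. fbar (snd p) (fst p)) ` (Dsk \<times> Jint) \<subseteq> Dsk" using fb_D by auto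
  have "continuous_on (Dsk \<times> Jint) (\<lambda>p. Upsilon \<phi> (fbar (snd p) (fst p)))"
    using continuous_on_compose2[OF Ups_cont c1 i1] by simp
  hence hc: "continuous_on (Dsk \<times> Jint) HH" unfolding HH_def H_eq by (intro continuous_intros)
  have hi: "HH ` (Dsk \<times> Jint) \<subseteq> Dsk \<times> Jint" using H_D by (auto simp: HH_def)
  have "continuous_on (Dsk \<times> Jint) (HH \<circ> (HH ^^ j))"
    using continuous_on_compose[of _ "HH ^^ j" HH] Suc.IH continuous_on_subset[OF hc] by blast
  moreover have "(HH ^^ Suc j) ` (Dsk \<times> Jint) \<subseteq> Dsk \<times> Jint"
  proof -
    have "(HH ^^ Suc j) ` (Dsk \<times> Jint) = HH ` ((HH ^^ j) ` (Dsk \<times> Jint))" by (simp add: image_image)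
    also have "\<dots> \<subseteq> HH ` (Dsk \<times> Jint)" using Suc.IH by (intro image_mono) auto
    finally show ?thesis using hi by blast
  qed
  ultimately show ?case by simp
qed

definition gf :: "real \<Rightarrow> real" where
  "gf s = (if s < 1 then s else 2 ^ nat \<lfloor>s\<rfloor> * ((s - real (nat \<lfloor>s\<rfloor>) + 1) / 2))"

lemma flo: assumes "1 \<le> s"
  shows "real (nat \<lfloor>s\<rfloor>) \<le> s" "s < real (nat \<lfloor>s\<rfloor>) + 1" "1 \<le> nat \<lfloor>s\<rfloor>"
proof -
  have f1: "1 \<le> \<lfloor>s\<rfloor>" using assms by (simp add: le_floor_iff)
  have e: "real (nat \<lfloor>s\<rfloor>) = real_of_int \<lfloor>s\<rfloor>" using f1 by simp
  show "real (nat \<lfloor>s\<rfloor>) \<le> s" "s < real (nat \<lfloor>s\<rfloor>) + 1" unfolding e by linarith+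
  show "1 \<le> nat \<lfloor>s\<rfloor>" using f1 by (subst le_nat_iff) auto
qed

lemma pw1: "n \<le> M \<Longrightarrow> (2::real)^(M-n) * (a / 2^M) = a / 2^n"
  by (simp add: power_diff field_simps)

lemma pw2: "k < n \<Longrightarrow> (2::real)^k * v / 2^n = v / 2^(n-k)"
  by (simp add: power_diff field_simps)

lemma Psit_small: "s < 1 \<Longrightarrow> Psit \<phi> fbar t (w,s) n = \<phi> (w, s / 2^n)"
  by (simp add: Psit_def)

lemma Psit_big: assumes "1 \<le> s"
  shows "Psit \<phi> fbar t (w,s) n = (if n \<le> nat \<lfloor>s\<rfloor> then (H t ^^ (nat \<lfloor>s\<rfloor> - n)) (\<phi> (w, (s - real (nat \<lfloor>s\<rfloor>) + 1) / 2))
     else \<phi> (w, ((s - real (nat \<lfloor>s\<rfloor>) + 1) / 2) / 2 ^ (n - nat \<lfloor>s\<rfloor>)))"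
  using assms by (simp add: Psit_def Let_def)

lemma Psit_formula:
  assumes t: "t \<in> Jint" and w: "w \<in> Scirc" and s: "0 \<le> s" "s < real M" and n: "n \<le> M"
  shows "Psit \<phi> fbar t (w,s) n = (H t ^^ (M - n)) (\<phi> (w, gf s / 2^M))"
proof (cases "s < 1")
  case True
  have u: "0 \<le> s / 2^M" using s by simp
  have "(1::real) \<le> 2^n" by simp
  hence "s \<le> 2^n" using True by linarith
  hence "s / 2^n \<le> 1" by (simp add: divide_le_eq_1)
  hence "2^(M-n) * (s / 2^M) \<le> 1" using pw1[OF n, of s] by simp
  hence "(H t ^^ (M - n)) (\<phi> (w, s / 2^M)) = \<phi> (w, s / 2^n)"
    using H_iter[OF t w u] pw1[OF n, of s] by simp
  thus ?thesis using True Psit_small by (simp add: gf_def)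
next
  case False
  define k where "k = nat \<lfloor>s\<rfloor>"
  define v where "v = (s - real k + 1) / 2"
  have fk: "real k \<le> s" "s < real k + 1" "1 \<le> k" using flo False unfolding k_def by auto
  have v: "1/2 \<le> v" "v < 1" using fk by (auto simp: v_def)
  have kM: "k < M" using fk s by linarith
  have g: "gf s = 2^k * v" using False by (simp add: gf_def k_def v_def)
  have P: "Psit \<phi> fbar t (w,s) n = (if n \<le> k then (H t ^^ (k - n)) (\<phi> (w, v)) else \<phi> (w, v / 2 ^ (n - k)))"
    using Psit_big[of s t w n] False by (simp add: k_def v_def)
  have u: "0 \<le> 2^k * v / 2^M" using v by simp
  show ?thesis
  proof (cases "n \<le> k")
    case True
    have e1: "2^(M-k) * (2^k * v / 2^M) = v" using pw1[of k M "2^k * v"] kM by (simp add: field_simps)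
    have "(H t ^^ (M - k)) (\<phi> (w, 2^k * v / 2^M)) = \<phi> (w, v)"
    proof -
      have "2^(M-k) * (2^k * v / 2^M) \<le> 1" using e1 v by simp
      from H_iter[OF t w u this] show ?thesis unfolding e1 .
    qed
    moreover have "M - n = (k - n) + (M - k)" using True kM by simp
    ultimately have "(H t ^^ (M - n)) (\<phi> (w, 2^k * v / 2^M)) = (H t ^^ (k - n)) (\<phi> (w, v))"
      by (simp add: funpow_add)
    thus ?thesis using P True g by simp
  next
    case False
    have e1: "2^(M-n) * (2^k * v / 2^M) = v / 2^(n-k)"
      using pw1[of n M "2^k * v"] n pw2[of k n v] False by simp
    have "(1::real) \<le> 2^(n-k)" by simp
    hence "v \<le> 2^(n-k)" using v by linarith
    hence "v / 2^(n-k) \<le> 1" by (simp add: divide_le_eq_1)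
    hence "(H t ^^ (M - n)) (\<phi> (w, 2^k * v / 2^M)) = \<phi> (w, v / 2^(n-k))"
    proof -
      have "2^(M-n) * (2^k * v / 2^M) \<le> 1" using e1 \<open>v / 2^(n-k) \<le> 1\<close> by simp
      from H_iter[OF t w u this] show ?thesis unfolding e1 .
    qed
    thus ?thesis using P False g by simp
  qed
qed

lemma gf_nonneg: "0 \<le> s \<Longrightarrow> 0 \<le> gf s"
  by (simp add: gf_def)

lemma gf_le: assumes "0 \<le> s" "s < real M" shows "gf s \<le> 2^M"
proof (cases "s < 1")
  case True
  have "(1::real) \<le> 2^M" by simp
  moreover have "gf s = s" using True by (simp add: gf_def)
  ultimately show ?thesis using True by linarith
next
  case False
  define k where "k = nat \<lfloor>s\<rfloor>"
  have fk: "real k \<le> s" "s < real k + 1" using flo False unfolding k_def by auto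
  have "(s - real k + 1) / 2 \<le> 1" using fk by simp
  moreover have "(2::real)^k \<le> 2^M" using fk assms by (intro power_increasing) auto
  ultimately have "2^k * ((s - real k + 1) / 2) \<le> (2::real)^M * 1"
    using fk by (intro mult_mono) auto
  thus ?thesis using False by (simp add: gf_def k_def)
qed

definition Mof :: "real \<Rightarrow> nat \<Rightarrow> nat" where "Mof s n = n + nat \<lceil>s\<rceil> + 1"

lemma Mof: "s < real (Mof s n)" "n < Mof s n"
proof -
  have "s \<le> real (nat \<lceil>s\<rceil>)" by linarith
  thus "s < real (Mof s n)" by (simp add: Mof_def)
  show "n < Mof s n" by (simp add: Mof_def)
qed

lemma base_K: assumes "w \<in> Scirc" "0 \<le> s" "s < real M" shows "0 \<le> gf s / 2^M" "gf s / 2^M \<le> 1"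
  using gf_nonneg[OF assms(2)] gf_le[OF assms(2,3)] by auto

lemma Psit_D: assumes t: "t \<in> Jint" and w: "w \<in> Scirc" and s: "0 \<le> s"
  shows "Psit \<phi> fbar t (w,s) n \<in> Dsk"
proof -
  let ?M = "Mof s n"
  have "Psit \<phi> fbar t (w,s) n = (H t ^^ (?M - n)) (\<phi> (w, gf s / 2^?M))"
    using Psit_formula[OF t w s Mof(1)] Mof(2)[of n s] by simp
  thus ?thesis using Hiter_sg[OF t phi_D[OF w base_K[OF w s Mof(1)]]] by simp
qed

lemma Psit_thread: assumes t: "t \<in> Jint" and w: "w \<in> Scirc" and s: "0 \<le> s"
  shows "H t (Psit \<phi> fbar t (w,s) (Suc n)) = Psit \<phi> fbar t (w,s) n"
proof -
  let ?M = "Mof s (Suc n)"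
  have a: "Psit \<phi> fbar t (w,s) (Suc n) = (H t ^^ (?M - Suc n)) (\<phi> (w, gf s / 2^?M))"
    using Psit_formula[OF t w s Mof(1)] Mof(2)[of "Suc n" s] by simp
  have b: "Psit \<phi> fbar t (w,s) n = (H t ^^ (?M - n)) (\<phi> (w, gf s / 2^?M))"
    using Psit_formula[OF t w s Mof(1)] Mof(2)[of "Suc n" s] by simp
  have "?M - n = Suc (?M - Suc n)" using Mof(2)[of "Suc n" s] by simp
  thus ?thesis using a b by simp
qed

lemma Psit_Dhat: "t \<in> Jint \<Longrightarrow> w \<in> Scirc \<Longrightarrow> 0 \<le> s \<Longrightarrow> Psit \<phi> fbar t (w,s) \<in> Dhat \<phi> fbar t"
  using Psit_D Psit_thread by (simp add: Dhat_def)

lemma real_sg1: assumes "x \<in> {-1..1}" shows "complex_of_real x \<in> Dsk \<and> sg (complex_of_real x) = 1"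
proof -
  define w where "w = Complex (2*x) (2 * sqrt (1 - x^2))"
  have "\<bar>x\<bar> \<le> 1" using assms by auto
  hence "x^2 \<le> 1" by (simp add: abs_square_le_1)
  hence x2: "0 \<le> 1 - x^2" by simp
  have "norm w = sqrt ((2*x)^2 + (2 * sqrt (1 - x^2))^2)" by (simp add: w_def complex_norm)
  also have "\<dots> = sqrt 4" using x2 by (simp add: power_mult_distrib)
  also have "\<dots> = 2" by (simp add: real_sqrt_eq_iff)
  finally have ws: "w \<in> Scirc" by (simp add: Scirc_def)
  have "\<phi> (w,1) = complex_of_real x" using phi1[OF ws] by (simp add: w_def)
  thus ?thesis using sg_phi[OF ws, of 1] phi_D[OF ws, of 1] by simp
qed

lemma sg1_real: assumes "z \<in> Dsk" "sg z = 1"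
  shows "z = complex_of_real (Re (om z) / 2) \<and> Re (om z) / 2 \<in> {-1..1}"
proof -
  have r: "om z \<in> Scirc" "\<phi> (om z, sg z) = z" using D_repr[OF assms(1)] by auto
  have "\<bar>Re (om z)\<bar> \<le> 2" using abs_Re_le_cmod[of "om z"] r(1) by (simp add: Scirc_def)
  thus ?thesis using phi1[OF r(1)] r(2) assms(2) by (auto simp: abs_le_iff)
qed

definition "clp u = max 0 (min 1 (u::real))"

lemma sumSL: fixes a :: "nat \<Rightarrow> real"
  assumes "\<forall>n<k. a n = 1" "a k = c" "c < 1" "0 < k \<Longrightarrow> 1/2 \<le> c" "a (Suc k) < 1/2" "0 \<le> c"
  shows "a 0 + (\<Sum>n\<in>{1..Suc k}. clp (2 * a n - 1)) = (if k = 0 then c else real k + 2*c - 1)"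
proof -
  have l: "clp (2 * a (Suc k) - 1) = 0" using assms(5) by (simp add: clp_def)
  have sk: "(\<Sum>n\<in>{1..Suc k}. clp (2 * a n - 1)) = (\<Sum>n\<in>{1..k}. clp (2 * a n - 1))"
    using l by (simp add: sum.cl_ivl_Suc)
  show ?thesis
  proof (cases k)
    case 0 thus ?thesis using sk assms(2) by simp
  next
    case (Suc m)
    have "(\<Sum>n\<in>{1..k}. clp (2 * a n - 1)) = (\<Sum>n\<in>{1..m}. clp (2 * a n - 1)) + clp (2 * c - 1)"
      using Suc assms(2) by (simp add: sum.cl_ivl_Suc)
    also have "(\<Sum>n\<in>{1..m}. clp (2 * a n - 1)) = (\<Sum>n\<in>{1..m}. 1)"
      by (rule sum.cong) (use assms(1) Suc in \<open>auto simp: clp_def\<close>)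
    also have "clp (2 * c - 1) = 2 * c - 1" using assms(3,4) Suc by (simp add: clp_def)
    finally have "(\<Sum>n\<in>{1..k}. clp (2 * a n - 1)) = real m + 2 * c - 1" by simp
    moreover have "a 0 = 1" using assms(1) Suc by simp
    ultimately show ?thesis using sk Suc by simp
  qed
qed

lemma div2pow_le: "0 \<le> (a::real) \<Longrightarrow> a / 2^m \<le> a"
proof -
  assume a: "0 \<le> a"
  have "a / 2^m \<le> a / 1" using a by (intro divide_left_mono) auto
  thus ?thesis by simp
qed

lemma Dhat_D: "z \<in> Dhat \<phi> fbar t \<Longrightarrow> z n \<in> Dsk"
  by (simp add: Dhat_def)
lemma Dhat_H: "z \<in> Dhat \<phi> fbar t \<Longrightarrow> H t (z (Suc n)) = z n"
  by (simp add: Dhat_def)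

lemma T1: assumes t: "t \<in> Jint" and z: "z \<in> Dhat \<phi> fbar t" and l: "sg (z n) < 1"
  shows "sg (z (Suc n)) = sg (z n) / 2 \<and> om (z (Suc n)) = om (z n)"
proof -
  have D: "z (Suc n) \<in> Dsk" using Dhat_D[OF z] .
  have e: "sg (z n) = min 1 (2 * sg (z (Suc n)))" using sg_H[OF t D] Dhat_H[OF z] by simp
  hence s2: "sg (z n) = 2 * sg (z (Suc n))" using l by (auto simp: min_def split: if_splits)
  hence s12: "sg (z (Suc n)) \<le> 1/2" using l by simp
  have r: "om (z (Suc n)) \<in> Scirc" "0 \<le> sg (z (Suc n))" using D_repr[OF D] by auto
  have "z n = \<phi> (om (z (Suc n)), 2 * sg (z (Suc n)))" using H_small[OF t D s12] Dhat_H[OF z] by simp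
  hence "om (z n) = om (z (Suc n))" using om_phi[OF r(1)] r(2) l s2 by simp
  thus ?thesis using s2 by simp
qed

lemma T2: assumes t: "t \<in> Jint" and z: "z \<in> Dhat \<phi> fbar t" and l: "sg (z n) < 1"
  shows "sg (z (n + m)) = sg (z n) / 2^m \<and> om (z (n + m)) = om (z n)"
proof (induction m)
  case 0 thus ?case by simp
next
  case (Suc m)
  have "sg (z (n + m)) < 1"
  proof -
    have "sg (z n) / 2^m \<le> sg (z n)" using D_repr[OF Dhat_D[OF z]] div2pow_le by blast
    moreover have e: "sg (z (n + m)) = sg (z n) / 2^m" using Suc.IH by blast
    ultimately show ?thesis using l by linarith
  qed
  thus ?case using T1[OF t z, of "n + m"] Suc.IH by simp
qed

lemma Tback: assumes "z \<in> Dhat \<phi> fbar t" shows "(H t ^^ d) (z (n + d)) = z n"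
proof (induction d)
  case 0 thus ?case by simp
next
  case (Suc d)
  have "(H t ^^ Suc d) (z (n + Suc d)) = (H t ^^ d) (H t (z (Suc (n + d))))"
    by (simp add: funpow_Suc_right del: funpow.simps)
  also have "\<dots> = z n" using Dhat_H[OF assms] Suc.IH by simp
  finally show ?case .
qed

definition GN :: "nat \<Rightarrow> (nat \<Rightarrow> complex \<times> real) \<Rightarrow> (complex \<times> real) \<times> real" where
  "GN N x = ((om (fst (x N)), sg (fst (x 0)) + (\<Sum>n\<in>{1..N}. clp (2 * sg (fst (x n)) - 1))), snd (x 0))"

definition "Gm x = GN (LEAST N. sg (fst (x N)) < 1/2) x"

lemma GN_step: assumes t: "t \<in> Jint" and z: "(\<lambda>n. fst (x n)) \<in> Dhat \<phi> fbar t"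
  and l: "sg (fst (x N)) < 1/2"
  shows "GN (Suc N) x = GN N x"
proof -
  have a: "sg (fst (x (Suc N))) = sg (fst (x N)) / 2 \<and> om (fst (x (Suc N))) = om (fst (x N))"
    using T1[OF t z, of N] l by simp
  hence "2 * sg (fst (x (Suc N))) - 1 < 0" using l by linarith
  hence "clp (2 * sg (fst (x (Suc N))) - 1) = 0" by (simp add: clp_def)
  hence "(\<Sum>n\<in>{1..Suc N}. clp (2 * sg (fst (x n)) - 1)) = (\<Sum>n\<in>{1..N}. clp (2 * sg (fst (x n)) - 1))"
    by (simp add: sum.cl_ivl_Suc)
  moreover have "om (fst (x (Suc N))) = om (fst (x N))" using a by blast
  ultimately show ?thesis unfolding GN_def by simp
qed

lemma GN_mono: assumes t: "t \<in> Jint" and z: "(\<lambda>n. fst (x n)) \<in> Dhat \<phi> fbar t"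
  and l: "sg (fst (x N)) < 1/2"
  shows "GN (N + d) x = GN N x"
proof (induction d)
  case 0 thus ?case by simp
next
  case (Suc d)
  have "sg (fst (x (N + d))) = sg (fst (x N)) / 2^d"
    using T2[OF t z, of N d] l by linarith
  moreover have "sg (fst (x N)) / 2^d \<le> sg (fst (x N))"
    using D_repr[OF Dhat_D[OF z, of N]] div2pow_le by blast
  ultimately have "sg (fst (x (N + d))) < 1/2" using l by linarith
  thus ?case using GN_step[OF t z, of "N + d"] Suc.IH by simp
qed

lemma Gm_eq: assumes t: "t \<in> Jint" and z: "(\<lambda>n. fst (x n)) \<in> Dhat \<phi> fbar t"
  and l: "sg (fst (x N)) < 1/2"
  shows "Gm x = GN N x"
proof -
  define L where "L = (LEAST N. sg (fst (x N)) < 1/2)"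
  have L1: "sg (fst (x L)) < 1/2" unfolding L_def by (rule LeastI[of _ N]) (rule l)
  have L2: "L \<le> N" unfolding L_def by (rule Least_le) (rule l)
  note L = L1 L2
  have "GN (L + (N - L)) x = GN L x" using GN_mono[OF t z L(1)] .
  thus ?thesis using L(2) by (simp add: Gm_def L_def)
qed

lemma Pihat_thread: assumes "x \<in> Pihat \<phi> fbar"
  shows "snd (x 0) \<in> Jint \<and> (\<lambda>n. fst (x n)) \<in> Dhat \<phi> fbar (snd (x 0)) \<and> x = iota (snd (x 0)) (\<lambda>n. fst (x n))"
proof -
  have th: "\<And>n. x n \<in> Dsk \<times> Jint \<and> (H (snd (x (Suc n))) (fst (x (Suc n))), snd (x (Suc n))) = x n"
    using assms by (simp add: Pihat_def)
  have sn: "snd (x n) = snd (x 0)" for n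
  proof (induction n)
    case 0 thus ?case by simp
  next
    case (Suc n)
    have "snd (x (Suc n)) = snd (x n)" using arg_cong[OF conjunct2[OF th[of n]], of snd] by simp
    thus ?case using Suc.IH by simp
  qed
  have D: "(\<lambda>n. fst (x n)) \<in> Dhat \<phi> fbar (snd (x 0))"
    unfolding Dhat_def
  proof (intro CollectI allI conjI)
    fix n
    show "fst (x n) \<in> Dsk" using th[of n] by auto
    have "H (snd (x (Suc n))) (fst (x (Suc n))) = fst (x n)" using arg_cong[OF conjunct2[OF th[of n]], of fst] by simp
    thus "H (snd (x 0)) (fst (x (Suc n))) = fst (x n)" using sn[of "Suc n"] by simp
  qed
  have "x = iota (snd (x 0)) (\<lambda>n. fst (x n))"
  proof (rule ext)
    fix n show "x n = iota (snd (x 0)) (\<lambda>n. fst (x n)) n" using sn[of n] by (simp add: iota_def prod_eq_iff)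
  qed
  thus ?thesis using D th[of 0] by auto
qed

lemma iota_Pihat: "t \<in> Jint \<Longrightarrow> z \<in> Dhat \<phi> fbar t \<Longrightarrow> iota t z \<in> Pihat \<phi> fbar"
  by (simp add: Pihat_def iota_def Dhat_def)

lemma iota_inj: assumes "iota t z = iota t' z'" shows "t = t' \<and> z = z'"
proof -
  have h: "(z n, t) = (z' n, t')" for n using fun_cong[OF assms, of n] by (simp add: iota_def)
  thus ?thesis by auto
qed

lemma Psi_eq: "Psi \<phi> fbar ((w,s),t) = iota t (Psit \<phi> fbar t (w,s))"
  by (simp add: Psi_def)

lemma Psit_sg_small: assumes "w \<in> Scirc" "0 \<le> s" "s < 1"
  shows "sg (Psit \<phi> fbar t (w,s) n) = s / 2^n \<and> om (Psit \<phi> fbar t (w,s) n) = w"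
proof -
  have a: "0 \<le> s / 2^n" "s / 2^n < 1" using assms by (auto simp: divide_less_eq less_le_trans[of s 1])
  show ?thesis using Psit_small[OF assms(3)] sg_phi[OF assms(1) a(1)] om_phi[OF assms(1) a] a by simp
qed

lemma Psit_sg_big: assumes t: "t \<in> Jint" and w: "w \<in> Scirc" and s: "1 \<le> s"
  defines "k \<equiv> nat \<lfloor>s\<rfloor>" and "v \<equiv> (s - real (nat \<lfloor>s\<rfloor>) + 1) / 2"
  shows "\<And>n. n < k \<Longrightarrow> sg (Psit \<phi> fbar t (w,s) n) = 1"
    "sg (Psit \<phi> fbar t (w,s) k) = v"
    "sg (Psit \<phi> fbar t (w,s) (Suc k)) = v / 2"
    "om (Psit \<phi> fbar t (w,s) (Suc k)) = w"
    "1/2 \<le> v" "v < 1" "1 \<le> k" "s = real k + 2 * v - 1"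
proof -
  have fk: "real k \<le> s" "s < real k + 1" "1 \<le> k" using flo[OF s] unfolding k_def by auto
  have ve: "v = (s - real k + 1) / 2" by (simp add: v_def k_def)
  show v: "1/2 \<le> v" "v < 1" using fk unfolding ve by auto
  show "1 \<le> k" using fk by simp
  have "2 * v = s - real k + 1" by (simp add: v_def k_def)
  thus "s = real k + 2 * v - 1" by linarith
  have P: "Psit \<phi> fbar t (w,s) n = (if n \<le> k then (H t ^^ (k - n)) (\<phi> (w, v)) else \<phi> (w, v / 2 ^ (n - k)))" for n
    using Psit_big[OF s, of t w n] by (simp add: k_def v_def)
  have v0: "0 \<le> v" "v \<le> 1" using v by auto
  have pD: "\<phi> (w, v) \<in> Dsk" using phi_D[OF w v0] .
  show "sg (Psit \<phi> fbar t (w,s) n) = 1" if "n < k" for n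
  proof -
    have "(2::real) ^ 1 \<le> 2 ^ (k - n)" using that by (intro power_increasing) auto
    hence p2: "2 \<le> (2::real) ^ (k - n)" by simp
    have "2 * (1/2) \<le> 2 ^ (k - n) * v" by (rule mult_mono[OF p2 v(1)]) simp_all
    hence "1 \<le> 2 ^ (k - n) * v" by simp
    thus ?thesis using P[of n] that Hiter_sg[OF t pD, of "k - n"] sg_phi[OF w v0] by simp
  qed
  show "sg (Psit \<phi> fbar t (w,s) k) = v" using P[of k] sg_phi[OF w v0] by simp
  have a: "0 \<le> v / 2" "v / 2 < 1" using v by auto
  show "sg (Psit \<phi> fbar t (w,s) (Suc k)) = v / 2" using P[of "Suc k"] sg_phi[OF w] a by simp
  show "om (Psit \<phi> fbar t (w,s) (Suc k)) = w" using P[of "Suc k"] om_phi[OF w a] by simp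
qed

lemma Psit_notI: assumes t: "t \<in> Jint" and w: "w \<in> Scirc" and s: "0 \<le> s"
  shows "Psit \<phi> fbar t (w,s) \<notin> Ihat t"
proof
  assume "Psit \<phi> fbar t (w,s) \<in> Ihat t"
  then obtain x where x: "Psit \<phi> fbar t (w,s) = (\<lambda>n. complex_of_real (x n))" "\<forall>n. x n \<in> {-1..1}"
    unfolding Ihat_def by blast
  define kk where "kk = (if s < 1 then 0 else nat \<lfloor>s\<rfloor>)"
  have "sg (Psit \<phi> fbar t (w,s) kk) < 1"
  proof (cases "s < 1")
    case True thus ?thesis using Psit_sg_small[OF w s True, of t 0] by (simp add: kk_def)
  next
    case False thus ?thesis using Psit_sg_big[OF t w, of s] by (simp add: kk_def)
  qed
  moreover have "sg (complex_of_real (x kk)) = 1" using real_sg1 x(2) by blast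
  ultimately show False using x(1) by (metis less_irrefl)
qed

lemma Psi_in: assumes t: "t \<in> Jint" and w: "w \<in> Scirc" and s: "0 \<le> s"
  shows "Psi \<phi> fbar ((w,s),t) \<in> PihatC \<phi> fbar"
proof -
  have "Psi \<phi> fbar ((w,s),t) \<in> Pihat \<phi> fbar" unfolding Psi_eq by (rule iota_Pihat[OF t Psit_Dhat[OF t w s]])
  moreover have "Psi \<phi> fbar ((w,s),t) \<notin> (\<Union>t\<in>Jint. iota t ` Ihat t)"
  proof
    assume "Psi \<phi> fbar ((w,s),t) \<in> (\<Union>t\<in>Jint. iota t ` Ihat t)"
    then obtain t' y where "y \<in> Ihat t'" "iota t (Psit \<phi> fbar t (w,s)) = iota t' y" unfolding Psi_eq by blast
    thus False using iota_inj Psit_notI[OF t w s] by blast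
  qed
  ultimately show ?thesis by (simp add: PihatC_def)
qed

lemma G_Psi: assumes t: "t \<in> Jint" and w: "w \<in> Scirc" and s: "0 \<le> s"
  shows "Gm (Psi \<phi> fbar ((w,s),t)) = ((w,s),t)"
proof -
  define x where "x = Psi \<phi> fbar ((w,s),t)"
  have fx: "(\<lambda>n. fst (x n)) = Psit \<phi> fbar t (w,s)" "\<And>n. snd (x n) = t"
    by (auto simp: x_def Psi_eq iota_def)
  have zD: "(\<lambda>n. fst (x n)) \<in> Dhat \<phi> fbar t" using fx(1) Psit_Dhat[OF t w s] by simp
  have fxn: "fst (x n) = Psit \<phi> fbar t (w,s) n" for n using fx(1) by metis
  define k where "k = (if s < 1 then 0 else nat \<lfloor>s\<rfloor>)"
  define a where "a n = sg (fst (x n))" for n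
  have res: "sg (fst (x (Suc k))) < 1/2 \<and> om (fst (x (Suc k))) = w \<and>
      a 0 + (\<Sum>n\<in>{1..Suc k}. clp (2 * a n - 1)) = s"
  proof (cases "s < 1")
    case True
    have A: "a n = s / 2^n" "om (fst (x n)) = w" for n using Psit_sg_small[OF w s True, of t n] by (auto simp: a_def fxn)
    have "a 0 + (\<Sum>n\<in>{1..Suc 0}. clp (2 * a n - 1)) = (if (0::nat) = 0 then s else real 0 + 2 * s - 1)"
      by (rule sumSL) (use A True s in auto)
    thus ?thesis using A[of 1] True by (simp add: k_def a_def)
  next
    case False
    define v where "v = (s - real (nat \<lfloor>s\<rfloor>) + 1) / 2"
    have kk: "k = nat \<lfloor>s\<rfloor>" using False by (simp add: k_def)
    have s1: "1 \<le> s" using False by simp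
    note B = Psit_sg_big[OF t w s1, folded kk v_def]
    have h1: "\<forall>n<k. a n = 1" using B(1) by (simp add: a_def fxn)
    have h2: "a k = v" using B(2) by (simp add: a_def fxn)
    have h5: "a (Suc k) < 1/2" using B(3) B(6) by (simp add: a_def fxn)
    have h4: "0 < k \<Longrightarrow> 1/2 \<le> v" using B(5) by simp
    have h6: "0 \<le> v" using B(5) by simp
    have "a 0 + (\<Sum>n\<in>{1..Suc k}. clp (2 * a n - 1)) = (if k = 0 then v else real k + 2 * v - 1)"
      by (rule sumSL[OF h1 h2 B(6) h4 h5 h6])
    also have "\<dots> = s" using B(7) B(8) by simp
    finally have "a 0 + (\<Sum>n\<in>{1..Suc k}. clp (2 * a n - 1)) = s" .
    moreover have "sg (fst (x (Suc k))) < 1/2" using h5 by (simp add: a_def)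
    moreover have "om (fst (x (Suc k))) = w" using B(4) by (simp add: fxn)
    ultimately show ?thesis by blast
  qed
  have "Gm x = GN (Suc k) x" using Gm_eq[OF t zD] res by simp
  also have "\<dots> = ((w,s),t)" using res fx(2) by (simp add: GN_def a_def)
  finally show ?thesis by (simp add: x_def)
qed

lemma PihatC_cases: assumes "y \<in> PihatC \<phi> fbar"
  shows "snd (y 0) \<in> Jint \<and> (\<lambda>n. fst (y n)) \<in> Dhat \<phi> fbar (snd (y 0)) \<and>
         y = iota (snd (y 0)) (\<lambda>n. fst (y n)) \<and> (\<lambda>n. fst (y n)) \<notin> Ihat (snd (y 0))"
proof -
  have P: "y \<in> Pihat \<phi> fbar" "y \<notin> (\<Union>t\<in>Jint. iota t ` Ihat t)" using assms by (auto simp: PihatC_def)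
  note T = Pihat_thread[OF P(1)]
  have "(\<lambda>n. fst (y n)) \<notin> Ihat (snd (y 0))"
  proof
    assume "(\<lambda>n. fst (y n)) \<in> Ihat (snd (y 0))"
    hence "y \<in> iota (snd (y 0)) ` Ihat (snd (y 0))" using T by (metis image_eqI)
    thus False using P(2) T by blast
  qed
  thus ?thesis using T by blast
qed

lemma exists_k: assumes t: "t \<in> Jint" and z: "z \<in> Dhat \<phi> fbar t" and nI: "z \<notin> Ihat t"
  shows "\<exists>n. sg (z n) < 1"
proof (rule ccontr)
  assume na: "\<not> (\<exists>n. sg (z n) < 1)"
  have s1: "sg (z n) = 1" for n
  proof -
    have "\<not> sg (z n) < 1" using na by blast
    thus ?thesis using D_repr[OF Dhat_D[OF z, of n]] by simp
  qed
  define xs where "xs n = Re (om (z n)) / 2" for n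
  have zx: "z n = complex_of_real (xs n)" "xs n \<in> {-1..1}" for n
    using sg1_real[OF Dhat_D[OF z] s1] by (auto simp: xs_def)
  have "ft t (xs (Suc n)) = xs n" for n
  proof -
    have "complex_of_real (ft t (xs (Suc n))) = Upsilon \<phi> (fbar t (complex_of_real (xs (Suc n))))"
      using uw_t(2)[OF t] zx(2)[of "Suc n"] by simp
    also have "\<dots> = H t (z (Suc n))" using zx(1)[of "Suc n"] by (simp add: H_eq)
    also have "\<dots> = complex_of_real (xs n)" using Dhat_H[OF z] zx(1)[of n] by simp
    finally show ?thesis by simp
  qed
  hence "z \<in> Ihat t" unfolding Ihat_def using zx by (auto intro!: exI[of _ xs])
  thus False using nI by simp
qed

lemma exN: assumes "y \<in> PihatC \<phi> fbar" shows "\<exists>N. sg (fst (y N)) < 1/2"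
proof -
  note C = PihatC_cases[OF assms]
  obtain n where n: "sg (fst (y n)) < 1" using exists_k[of "snd (y 0)" "\<lambda>n. fst (y n)"] C by auto
  have "sg (fst (y (Suc n))) = sg (fst (y n)) / 2" using T1[of "snd (y 0)" "\<lambda>n. fst (y n)" n] C n by auto
  thus ?thesis using n by (intro exI[of _ "Suc n"]) simp
qed

lemma Psi_G: assumes y: "y \<in> PihatC \<phi> fbar"
  shows "Gm y \<in> Acyl \<times> Jint \<and> Psi \<phi> fbar (Gm y) = y"
proof -
  note C = PihatC_cases[OF y]
  define t where "t = snd (y 0)"
  define z where "z = (\<lambda>n. fst (y n))"
  have t: "t \<in> Jint" and z: "z \<in> Dhat \<phi> fbar t" and yz: "y = iota t z" and nI: "z \<notin> Ihat t"
    using C by (auto simp: t_def z_def)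
  have ex: "\<exists>n. sg (z n) < 1" using exists_k[OF t z nI] .
  define k where "k = (LEAST n. sg (z n) < 1)"
  define c where "c = sg (z k)"
  have c1: "c < 1" unfolding c_def k_def using ex by (metis LeastI)
  have below: "\<forall>n<k. sg (z n) = 1"
  proof (intro allI impI)
    fix n assume "n < k"
    hence "\<not> sg (z n) < 1" unfolding k_def by (rule not_less_Least)
    thus "sg (z n) = 1" using D_repr[OF Dhat_D[OF z, of n]] by simp
  qed
  have zk: "z k \<in> Dsk" using Dhat_D[OF z] .
  have c0: "0 \<le> c" using D_repr[OF zk] by (simp add: c_def)
  define w where "w = om (z k)"
  have w: "w \<in> Scirc" using D_repr[OF zk] by (simp add: w_def)
  have zkphi: "z k = \<phi> (w, c)" using D_repr[OF zk] by (simp add: w_def c_def)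
  have ch: "0 < k \<Longrightarrow> 1/2 \<le> c"
  proof -
    assume k0: "0 < k"
    then obtain m where m: "k = Suc m" by (cases k) auto
    have "sg (z m) = min 1 (2 * c)" using sg_H[OF t zk] Dhat_H[OF z, of m] m by (simp add: c_def)
    moreover have "sg (z m) = 1" using below m by simp
    ultimately show ?thesis by (simp add: min_def split: if_splits)
  qed
  have T: "sg (z (k + m)) = c / 2^m \<and> om (z (k + m)) = w" for m
    using T2[OF t z, of k m] c1 by (simp add: c_def w_def)
  define s where "s = (if k = 0 then c else real k + 2 * c - 1)"
  have s0: "0 \<le> s" using c0 ch by (auto simp: s_def)
  have GN: "Gm y = ((w, s), t)"
  proof -
    have zS: "sg (z (Suc k)) = c / 2" "om (z (Suc k)) = w" using T[of 1] by auto
    have hs: "sg (fst (y (Suc k))) < 1/2" using zS c1 by (simp add: z_def)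
    have zD: "(\<lambda>n. fst (y n)) \<in> Dhat \<phi> fbar t" using z by (simp add: z_def)
    have "Gm y = GN (Suc k) y" using Gm_eq[OF t zD hs] .
    moreover have "sg (z 0) + (\<Sum>n\<in>{1..Suc k}. clp (2 * sg (z n) - 1)) = s"
      unfolding s_def
      by (rule sumSL[where a = "\<lambda>n. sg (z n)"]) (use below c1 ch c0 zS in \<open>auto simp: c_def\<close>)
    ultimately show ?thesis using zS(2) by (simp add: GN_def z_def t_def)
  qed
  have Pz: "Psit \<phi> fbar t (w, s) = z"
  proof (rule ext)
    fix n
    show "Psit \<phi> fbar t (w, s) n = z n"
    proof (cases "k = 0")
      case True
      have "z n = \<phi> (w, c / 2^n)" using T[of n] D_repr[OF Dhat_D[OF z, of n]] True by auto
      thus ?thesis using Psit_small[of s t w n] True c1 by (simp add: s_def)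
    next
      case False
      have s1: "1 \<le> s" using False ch by (simp add: s_def)
      have fl: "\<lfloor>s\<rfloor> = int k"
        by (rule floor_unique) (use False ch c1 in \<open>auto simp: s_def\<close>)
      hence nk: "nat \<lfloor>s\<rfloor> = k" by simp
      have vv: "(s - real k + 1) / 2 = c" using False by (simp add: s_def)
      have P: "Psit \<phi> fbar t (w,s) n = (if n \<le> k then (H t ^^ (k - n)) (\<phi> (w, c)) else \<phi> (w, c / 2 ^ (n - k)))"
        using Psit_big[OF s1, of t w n] unfolding nk vv by assumption
      show ?thesis
      proof (cases "n \<le> k")
        case True
        have "(H t ^^ (k - n)) (z (n + (k - n))) = z n" by (rule Tback[OF z])
        thus ?thesis using P True zkphi by simp
      next
        case False
        have "z (k + (n - k)) = \<phi> (w, c / 2^(n-k))" using T[of "n - k"] D_repr[OF Dhat_D[OF z, of "k + (n-k)"]] by auto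
        thus ?thesis using P False by simp
      qed
    qed
  qed
  have "Psi \<phi> fbar (Gm y) = Psi \<phi> fbar ((w, s), t)" using GN by simp
  also have "\<dots> = iota t (Psit \<phi> fbar t (w, s))" by (rule Psi_eq)
  also have "\<dots> = y" using Pz yz by simp
  finally have "Psi \<phi> fbar (Gm y) = y" .
  moreover have "Gm y \<in> Acyl \<times> Jint" using GN w s0 t by (simp add: Acyl_def)
  ultimately show ?thesis by blast
qed

lemma gf_piece: assumes "real M \<le> s" "s \<le> real M + 1"
  shows "gf s = (if M = 0 then s else 2^M * ((s - real M + 1) / 2))"
proof (cases "s = real M + 1")
  case True
  have fl: "\<lfloor>s\<rfloor> = int (Suc M)" using True by (simp add: floor_unique)
  hence nk: "nat \<lfloor>s\<rfloor> = Suc M" by simp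
  have "gf s = 2^(Suc M) * ((s - real (Suc M) + 1) / 2)" using True unfolding gf_def nk by simp
  also have "\<dots> = 2^M" using True by simp
  finally show ?thesis using True by auto
next
  case False
  hence lt: "s < real M + 1" using assms by simp
  show ?thesis
  proof (cases "M = 0")
    case True thus ?thesis using lt by (simp add: gf_def)
  next
    case M: False
    have fl: "\<lfloor>s\<rfloor> = int M" by (rule floor_unique) (use assms lt in auto)
    hence nk: "nat \<lfloor>s\<rfloor> = M" by simp
    have "\<not> s < 1" using M assms by simp
    thus ?thesis unfolding gf_def nk using M by simp
  qed
qed

lemma gf_contM: "continuous_on {0..real M} gf"
proof (induction M)
  case 0 thus ?case by simp
next
  case (Suc M)
  have c: "continuous_on {real M..real M + 1} gf"
  proof (cases "M = 0")
    case True
    have "continuous_on {real M..real M + 1} (\<lambda>s. s)" by (rule continuous_on_id)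
    thus ?thesis
    proof (rule continuous_on_eq)
      fix x assume x: "x \<in> {real M..real M + 1}"
      show "x = gf x" using gf_piece[of M x] x True by simp
    qed
  next
    case False
    have "continuous_on {real M..real M + 1} (\<lambda>s. 2^M * ((s - real M + 1) / 2))"
      by (intro continuous_intros) auto
    thus ?thesis
    proof (rule continuous_on_eq)
      fix x assume x: "x \<in> {real M..real M + 1}"
      show "2^M * ((x - real M + 1) / 2) = gf x" using gf_piece[of M x] x False by simp
    qed
  qed
  have e: "{0..real (Suc M)} = {0..real M} \<union> {real M..real M + 1}" by auto
  show ?case unfolding e by (rule continuous_on_closed_Un[OF _ _ Suc.IH c]) auto
qed

lemma gf_cont: "continuous_on {0..} gf"
proof (rule cont_local)
  fix x :: real assume x: "x \<in> {0..}"
  define M where "M = nat \<lceil>x\<rceil> + 1"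
  have xM: "x < real M" unfolding M_def by linarith
  show "\<exists>U. openin (top_of_set {0..}) U \<and> x \<in> U \<and> continuous_on U gf"
  proof (intro exI conjI)
    show "openin (top_of_set {0..}) ({0..} \<inter> {..<real M})" by (rule openin_open_Int) simp
    show "x \<in> {0..} \<inter> {..<real M}" using x xM by simp
    show "continuous_on ({0..} \<inter> {..<real M}) gf"
      by (rule continuous_on_subset[OF gf_contM[of M]]) auto
  qed
qed

lemma Psi_coord: "Psi \<phi> fbar p n = (Psit \<phi> fbar (snd p) (fst p) n, snd p)"
  by (cases p) (simp add: Psi_def iota_def)

lemma Psit_cont_n: "continuous_on (Acyl \<times> Jint) (\<lambda>p. Psit \<phi> fbar (snd p) (fst p) n)"
proof (rule cont_local)
  fix p0 assume p0: "p0 \<in> Acyl \<times> Jint"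
  define M where "M = Mof (snd (fst p0)) n"
  define U where "U = (Acyl \<times> Jint) \<inter> {p. snd (fst p) < real M}"
  have opU: "openin (top_of_set (Acyl \<times> Jint)) U"
    unfolding U_def by (rule openin_open_Int) (intro open_Collect_less continuous_intros)
  have p0U: "p0 \<in> U" using p0 Mof(1) by (simp add: U_def M_def)
  have nM: "n \<le> M" using Mof(2) by (simp add: M_def less_imp_le)
  define q where "q p = (\<phi> (fst (fst p), gf (snd (fst p)) / 2^M), snd p)" for p :: "(complex \<times> real) \<times> real"
  have Ui: "p \<in> U \<Longrightarrow> fst (fst p) \<in> Scirc \<and> 0 \<le> snd (fst p) \<and> snd (fst p) < real M \<and> snd p \<in> Jint" for p
    by (auto simp: U_def Acyl_def)
  have c1: "continuous_on U (\<lambda>p. gf (snd (fst p)))"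
    by (rule continuous_on_compose2[OF gf_cont]) (use Ui in \<open>auto intro!: continuous_intros\<close>)
  have c2: "continuous_on U (\<lambda>p. \<phi> (fst (fst p), gf (snd (fst p)) / 2^M))"
  proof (rule continuous_on_compose2[OF phi_cont])
    show "continuous_on U (\<lambda>p. (fst (fst p), gf (snd (fst p)) / 2^M))"
      by (intro continuous_intros c1) auto
    show "(\<lambda>p. (fst (fst p), gf (snd (fst p)) / 2^M)) ` U \<subseteq> K"
    proof
      fix a assume "a \<in> (\<lambda>p. (fst (fst p), gf (snd (fst p)) / 2^M)) ` U"
      then obtain p where p: "p \<in> U" "a = (fst (fst p), gf (snd (fst p)) / 2^M)" by blast
      have u: "fst (fst p) \<in> Scirc" "0 \<le> snd (fst p)" "snd (fst p) < real M" using Ui[OF p(1)] by auto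
      show "a \<in> K" using base_K[OF u] u(1) p(2) by simp
    qed
  qed
  have cq: "continuous_on U q" unfolding q_def by (intro continuous_intros c2)
  have qi: "q ` U \<subseteq> Dsk \<times> Jint"
  proof
    fix a assume "a \<in> q ` U"
    then obtain p where p: "p \<in> U" "a = q p" by blast
    show "a \<in> Dsk \<times> Jint" using Ui[OF p(1)] phi_D base_K p(2) by (auto simp: q_def)
  qed
  have c3: "continuous_on U (\<lambda>p. fst ((HH ^^ (M - n)) (q p)))"
    by (intro continuous_intros continuous_on_compose2[OF conjunct1[OF HH_cont] cq qi])
  have eq: "fst ((HH ^^ (M - n)) (q p)) = Psit \<phi> fbar (snd p) (fst p) n" if "p \<in> U" for p
  proof -
    obtain w s t where pp: "p = ((w,s),t)" by (metis prod.collapse)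
    have "Psit \<phi> fbar t (w,s) n = (H t ^^ (M - n)) (\<phi> (w, gf s / 2^M))"
      using Psit_formula[of t w s M n] Ui[OF that] nM pp by simp
    thus ?thesis by (simp add: q_def HH_iter pp)
  qed
  have "continuous_on U (\<lambda>p. Psit \<phi> fbar (snd p) (fst p) n)"
    using continuous_on_eq[OF c3 eq] by blast
  thus "\<exists>U. openin (top_of_set (Acyl \<times> Jint)) U \<and> p0 \<in> U \<and> continuous_on U (\<lambda>p. Psit \<phi> fbar (snd p) (fst p) n)"
    using opU p0U by blast
qed

lemma Psi_cont: "continuous_on (Acyl \<times> Jint) (Psi \<phi> fbar)"
proof (rule continuous_on_coordinatewise_then_product)
  fix n
  have "continuous_on (Acyl \<times> Jint) (\<lambda>p. (Psit \<phi> fbar (snd p) (fst p) n, snd p))"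
    by (intro continuous_intros Psit_cont_n)
  thus "continuous_on (Acyl \<times> Jint) (\<lambda>p. Psi \<phi> fbar p n)" by (simp add: Psi_coord)
qed

lemma coord_cont: "continuous_on S (\<lambda>y::nat \<Rightarrow> complex \<times> real. y n)"
  by (rule continuous_on_subset[OF continuous_on_product_coordinates]) simp

lemma sg_coord_cont: "continuous_on (PihatC \<phi> fbar) (\<lambda>y. sg (fst (y n)))"
proof (rule continuous_on_compose2[OF sg_cont])
  show "continuous_on (PihatC \<phi> fbar) (\<lambda>y. fst (y n))" by (intro continuous_intros coord_cont)
  show "(\<lambda>y. fst (y n)) ` PihatC \<phi> fbar \<subseteq> Dsk"
  proof
    fix a assume "a \<in> (\<lambda>y. fst (y n)) ` PihatC \<phi> fbar"
    then obtain y where y: "y \<in> PihatC \<phi> fbar" "a = fst (y n)" by blast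
    have "(\<lambda>n. fst (y n)) \<in> Dhat \<phi> fbar (snd (y 0))" using PihatC_cases[OF y(1)] by blast
    from Dhat_D[OF this, of n] show "a \<in> Dsk" using y(2) by simp
  qed
qed

lemma G_cont: "continuous_on (PihatC \<phi> fbar) Gm"
proof (rule cont_local)
  fix y0 assume y0: "y0 \<in> PihatC \<phi> fbar"
  obtain N where N: "sg (fst (y0 N)) < 1/2" using exN[OF y0] by blast
  define U where "U = PihatC \<phi> fbar \<inter> (\<lambda>y. sg (fst (y N))) -` {..<1/2}"
  have opU: "openin (top_of_set (PihatC \<phi> fbar)) U"
    unfolding U_def by (rule continuous_openin_preimage_gen[OF sg_coord_cont]) simp
  have y0U: "y0 \<in> U" using y0 N by (simp add: U_def)
  have UP: "U \<subseteq> PihatC \<phi> fbar" by (simp add: U_def)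
  have com: "continuous_on U (\<lambda>y. om (fst (y N)))"
  proof (rule continuous_on_compose2[OF om_cont])
    show "continuous_on U (\<lambda>y. fst (y N))" by (intro continuous_intros coord_cont)
    show "(\<lambda>y. fst (y N)) ` U \<subseteq> {z \<in> Dsk. sg z \<le> 1/2}"
    proof
      fix a assume "a \<in> (\<lambda>y. fst (y N)) ` U"
      then obtain y where y: "y \<in> U" "a = fst (y N)" by blast
      have yP: "y \<in> PihatC \<phi> fbar" and l: "sg (fst (y N)) \<in> {..<1/2}" using y(1) unfolding U_def by blast+
      have "(\<lambda>n. fst (y n)) \<in> Dhat \<phi> fbar (snd (y 0))" using PihatC_cases[OF yP] by blast
      from Dhat_D[OF this, of N] have "fst (y N) \<in> Dsk" by simp
      moreover have "sg (fst (y N)) \<le> 1/2" using l by simp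
      ultimately show "a \<in> {z \<in> Dsk. sg z \<le> 1/2}" using y(2) by simp
    qed
  qed
  have csg: "continuous_on U (\<lambda>y. sg (fst (y n)))" for n
    by (rule continuous_on_subset[OF sg_coord_cont UP])
  have cGN: "continuous_on U (GN N)"
    unfolding GN_def clp_def
    by (intro continuous_intros com csg coord_cont)
  have eq: "GN N y = Gm y" if "y \<in> U" for y
  proof -
    have C: "snd (y 0) \<in> Jint" "(\<lambda>n. fst (y n)) \<in> Dhat \<phi> fbar (snd (y 0))"
      using PihatC_cases[of y] that by (auto simp: U_def)
    have l: "sg (fst (y N)) \<in> {..<1/2}" using that unfolding U_def by blast
    hence "sg (fst (y N)) < 1/2" by (simp only: lessThan_iff)
    from Gm_eq[OF C this] show ?thesis by simp
  qed
  have "continuous_on U Gm" using continuous_on_eq[OF cGN eq] by blast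
  thus "\<exists>U. openin (top_of_set (PihatC \<phi> fbar)) U \<and> y0 \<in> U \<and> continuous_on U Gm"
    using opU y0U by blast
qed
end

theorem mainTheorem7:
  fixes \<phi> :: "complex \<times> real \<Rightarrow> complex" and fbar :: "real \<Rightarrow> complex \<Rightarrow> complex"
  assumes "mapping_cyl_coords \<phi>"
    and "unwrapping \<phi> fbar"
    and "\<forall>t\<in>Jint. \<forall>w\<in>Scirc. \<forall>s\<in>{0..3/4}. fbar t (\<phi> (w, s)) = \<phi> (w, s)"
  shows "(\<exists>g. homeomorphism (Acyl \<times> Jint) (PihatC \<phi> fbar) (Psi \<phi> fbar) g)
       \<and> (\<forall>t\<in>Jint. Psi \<phi> fbar ` (Acyl \<times> {t}) \<subseteq> iota t ` Dhat \<phi> fbar t)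
       \<and> (\<forall>t\<in>Jint. \<exists>g. homeomorphism Acyl (Dhat \<phi> fbar t - Ihat t) (Psit \<phi> fbar t) g)"
proof -
  interpret L \<phi> fbar using assms by unfold_locales
  have A: "\<And>p. p \<in> Acyl \<Longrightarrow> fst p \<in> Scirc \<and> 0 \<le> snd p" by (auto simp: Acyl_def)
  have GP: "Gm (Psi \<phi> fbar x) = x" if "x \<in> Acyl \<times> Jint" for x
  proof -
    obtain w s t where x: "x = ((w,s),t)" by (metis prod.collapse)
    show ?thesis using G_Psi[of t w s] that x A by auto
  qed
  have PI: "Psi \<phi> fbar x \<in> PihatC \<phi> fbar" if "x \<in> Acyl \<times> Jint" for x
  proof -
    obtain w s t where x: "x = ((w,s),t)" by (metis prod.collapse)
    show ?thesis using Psi_in[of t w s] that x A by auto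
  qed
  have H1: "homeomorphism (Acyl \<times> Jint) (PihatC \<phi> fbar) (Psi \<phi> fbar) Gm"
    unfolding homeomorphism_def
  proof (intro conjI ballI Psi_cont G_cont)
    show "\<And>x. x \<in> Acyl \<times> Jint \<Longrightarrow> Gm (Psi \<phi> fbar x) = x" by (rule GP)
    show "\<And>y. y \<in> PihatC \<phi> fbar \<Longrightarrow> Psi \<phi> fbar (Gm y) = y" using Psi_G by blast
    show "Psi \<phi> fbar ` (Acyl \<times> Jint) = PihatC \<phi> fbar"
    proof
      show "Psi \<phi> fbar ` (Acyl \<times> Jint) \<subseteq> PihatC \<phi> fbar" using PI by blast
      show "PihatC \<phi> fbar \<subseteq> Psi \<phi> fbar ` (Acyl \<times> Jint)"
      proof
        fix y assume y: "y \<in> PihatC \<phi> fbar"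
        thus "y \<in> Psi \<phi> fbar ` (Acyl \<times> Jint)" using Psi_G[OF y] by (metis image_eqI)
      qed
    qed
    show "Gm ` PihatC \<phi> fbar = Acyl \<times> Jint"
    proof
      show "Gm ` PihatC \<phi> fbar \<subseteq> Acyl \<times> Jint" using Psi_G by blast
      show "Acyl \<times> Jint \<subseteq> Gm ` PihatC \<phi> fbar"
      proof
        fix x assume x: "x \<in> Acyl \<times> Jint"
        thus "x \<in> Gm ` PihatC \<phi> fbar" using GP[OF x] PI[OF x] by (metis image_eqI)
      qed
    qed
  qed
  have H2: "\<forall>t\<in>Jint. Psi \<phi> fbar ` (Acyl \<times> {t}) \<subseteq> iota t ` Dhat \<phi> fbar t"
  proof (intro ballI subsetI)
    fix t a assume t: "t \<in> Jint" and a: "a \<in> Psi \<phi> fbar ` (Acyl \<times> {t})"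
    then obtain w s where ws: "(w,s) \<in> Acyl" "a = Psi \<phi> fbar ((w,s),t)" by auto
    have "a = iota t (Psit \<phi> fbar t (w,s))" using ws(2) by (simp add: Psi_eq)
    moreover have "Psit \<phi> fbar t (w,s) \<in> Dhat \<phi> fbar t" using Psit_Dhat[OF t] A[OF ws(1)] by simp
    ultimately show "a \<in> iota t ` Dhat \<phi> fbar t" by blast
  qed
  have H3: "\<exists>g. homeomorphism Acyl (Dhat \<phi> fbar t - Ihat t) (Psit \<phi> fbar t) g" if t: "t \<in> Jint" for t
  proof -
    define g where "g z = fst (Gm (iota t z))" for z
    have iP: "iota t z \<in> PihatC \<phi> fbar" if z: "z \<in> Dhat \<phi> fbar t - Ihat t" for z
    proof -
      have "iota t z \<in> Pihat \<phi> fbar" using iota_Pihat[OF t] z by blast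
      moreover have "iota t z \<notin> (\<Union>t\<in>Jint. iota t ` Ihat t)"
      proof
        assume "iota t z \<in> (\<Union>t\<in>Jint. iota t ` Ihat t)"
        then obtain t' y where "y \<in> Ihat t'" "iota t z = iota t' y" by blast
        thus False using iota_inj z by blast
      qed
      ultimately show ?thesis by (simp add: PihatC_def)
    qed
    have Pg: "Psit \<phi> fbar t (g z) = z \<and> g z \<in> Acyl" if z: "z \<in> Dhat \<phi> fbar t - Ihat t" for z
    proof -
      obtain w s t' where G: "Gm (iota t z) = ((w,s),t')" by (metis prod.collapse)
      have "Gm (iota t z) \<in> Acyl \<times> Jint \<and> Psi \<phi> fbar (Gm (iota t z)) = iota t z" using Psi_G[OF iP[OF z]] .
      hence "(w,s) \<in> Acyl" "iota t' (Psit \<phi> fbar t' (w,s)) = iota t z" using G by (auto simp: Psi_eq)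
      hence "(w,s) \<in> Acyl" "t' = t" "Psit \<phi> fbar t' (w,s) = z" using iota_inj by blast+
      thus ?thesis using G by (simp add: g_def)
    qed
    have gP: "g (Psit \<phi> fbar t p) = p" if p: "p \<in> Acyl" for p
    proof -
      obtain w s where ws: "p = (w,s)" by (metis prod.collapse)
      have "iota t (Psit \<phi> fbar t p) = Psi \<phi> fbar (p,t)" using ws by (simp add: Psi_eq)
      thus ?thesis using GP[of "(p,t)"] p t by (simp add: g_def)
    qed
    have PD: "Psit \<phi> fbar t p \<in> Dhat \<phi> fbar t - Ihat t" if p: "p \<in> Acyl" for p
    proof -
      obtain w s where ws: "p = (w,s)" by (metis prod.collapse)
      show ?thesis using Psit_Dhat[OF t] Psit_notI[OF t] A[OF p] ws by auto
    qed
    have cP: "continuous_on Acyl (Psit \<phi> fbar t)"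
    proof (rule continuous_on_coordinatewise_then_product)
      fix n
      have c0: "continuous_on (Acyl \<times> Jint) (\<lambda>q. Psi \<phi> fbar q n)"
        by (rule continuous_on_product_then_coordinatewise[OF Psi_cont])
      have c1: "continuous_on Acyl (\<lambda>p. (p, t))" by (intro continuous_intros)
      have i1: "(\<lambda>p. (p, t)) ` Acyl \<subseteq> Acyl \<times> Jint" using t by auto
      have "continuous_on Acyl (\<lambda>p. fst (Psi \<phi> fbar (p, t) n))"
        by (intro continuous_intros continuous_on_compose2[OF c0 c1 i1])
      thus "continuous_on Acyl (\<lambda>p. Psit \<phi> fbar t p n)" by (simp add: Psi_coord)
    qed
    have cg: "continuous_on (Dhat \<phi> fbar t - Ihat t) g"
    proof -
      have c1: "continuous_on (Dhat \<phi> fbar t - Ihat t) (iota t)"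
        unfolding iota_def
        by (intro continuous_on_coordinatewise_then_product continuous_intros
            continuous_on_subset[OF continuous_on_product_coordinates]) simp
      have i1: "iota t ` (Dhat \<phi> fbar t - Ihat t) \<subseteq> PihatC \<phi> fbar" using iP by blast
      show ?thesis unfolding g_def by (intro continuous_intros continuous_on_compose2[OF G_cont c1 i1])
    qed
    have "homeomorphism Acyl (Dhat \<phi> fbar t - Ihat t) (Psit \<phi> fbar t) g"
      unfolding homeomorphism_def
    proof (intro conjI ballI cP cg)
      show "\<And>x. x \<in> Acyl \<Longrightarrow> g (Psit \<phi> fbar t x) = x" by (rule gP)
      show "\<And>y. y \<in> Dhat \<phi> fbar t - Ihat t \<Longrightarrow> Psit \<phi> fbar t (g y) = y" using Pg by blast
      show "Psit \<phi> fbar t ` Acyl = Dhat \<phi> fbar t - Ihat t"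
      proof
        show "Psit \<phi> fbar t ` Acyl \<subseteq> Dhat \<phi> fbar t - Ihat t" using PD by blast
        show "Dhat \<phi> fbar t - Ihat t \<subseteq> Psit \<phi> fbar t ` Acyl"
        proof
          fix z assume z: "z \<in> Dhat \<phi> fbar t - Ihat t"
          thus "z \<in> Psit \<phi> fbar t ` Acyl" using Pg[OF z] by (metis image_eqI)
        qed
      qed
      show "g ` (Dhat \<phi> fbar t - Ihat t) = Acyl"
      proof
        show "g ` (Dhat \<phi> fbar t - Ihat t) \<subseteq> Acyl" using Pg by blast
        show "Acyl \<subseteq> g ` (Dhat \<phi> fbar t - Ihat t)"
        proof
          fix p assume p: "p \<in> Acyl"
          thus "p \<in> g ` (Dhat \<phi> fbar t - Ihat t)" using gP[OF p] PD[OF p] by (metis image_eqI)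
        qed
      qed
    qed
    thus ?thesis by blast
  qed
  show ?thesis using H1 H2 H3 by blast
qed

end
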